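(* For CTS-G with exploration rate $\gamma>0$ in the sleeping semi-bandit problem, in each round $t\ge\max\{\sqrt m,4\}$ and given any $\Theta_t$, $$\frac{1}{\Pr_{\Theta_t}\Big(\sum_{a\in A_t^*}w_{a,t}\ge\sum_{a\in A_t^*}r_a\Big)}\le 2\,\Phi\big(-\sqrt{4/\gamma}\big)^{-1},$$ where $\Phi$ is the standard Gaussian cdf and $\Pr_{\Theta_t}(\cdot):=\Pr(\cdot\mid\Theta_t)$.
   Context: Sleeping semi-bandit problem: $N\ge2$ base arms $[N]$, arm $a$ has reward distribution $p_a$ on $[0,1]$ with mean $r_a$; $\Theta\subseteq 2^{[N]}$ feasible super arms, $m:=\max_{A\in\Theta}|A|$. Each round $t=1,\dots,T$ a (possibly adversarial) $\Theta_t\subseteq\Theta$ is revealed, the agent plays $A_t\in\Theta_t$ and observes independent $X_{a,t}\sim p_a$ for $a\in A_t$. $A_t^*\in\arg\max_{A\in\Theta_t}\sum_{a\in A}r_a$. $n_{a,t}:=\sum_{\tau<t}\mathbf{1}[a\in A_\tau]$, $\hat r_{a,n_{a,t}}$ the empirical mean of observed rewards of $a$ before round $t$ ($0$ if none). CTS-G: each round draw independently $w_{a,t}\sim\mathcal{N}\big(\hat r_{a,n_{a,t}},\frac{\gamma m\ln t}{n_{a,t}+1}\big)$ for all $a$ and play $A_t\in\arg\max_{A\in\Theta_t}\sum_{a\in A}w_{a,t}$. *)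

theory Defs
  imports "HOL-Probability.Probability"
begin

text \<open>Reward-table model: X (a,k) is the (k+1)-th observed reward of arm a (k = 0,1,...),
  Z (a,t) is the standard Gaussian noise used for arm a in round t (rounds start at 1).
  A history is the list of super arms played in rounds 1,2,...\<close>

definition n_plays :: "'a set list \<Rightarrow> 'a \<Rightarrow> nat" where
  "n_plays hs a = length (filter (\<lambda>A. a \<in> A) hs)"

definition emp_mean :: "('a \<times> nat \<Rightarrow> real) \<Rightarrow> 'a set list \<Rightarrow> 'a \<Rightarrow> real" where
  "emp_mean X hs a = (\<Sum>k<n_plays hs a. X (a, k)) / real (n_plays hs a)"

text \<open>w_{a,t} = rhat + sqrt(gamma m ln t / (n+1)) * Z, i.e. N(rhat, gamma m ln t/(n+1)).\<close>
definition ctsg_sample ::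
  "real \<Rightarrow> nat \<Rightarrow> ('a \<times> nat \<Rightarrow> real) \<Rightarrow> ('a \<times> nat \<Rightarrow> real) \<Rightarrow> 'a set list \<Rightarrow> nat \<Rightarrow> 'a \<Rightarrow> real" where
  "ctsg_sample \<gamma> m X Z hs t a =
     emp_mean X hs a + sqrt (\<gamma> * real m * ln (real t) / (real (n_plays hs a) + 1)) * Z (a, t)"

text \<open>History after rounds 1..t; sel t w is the (tie-broken) argmax over Theta_t of the sampled sums.\<close>
fun ctsg_hist ::
  "real \<Rightarrow> nat \<Rightarrow> (nat \<Rightarrow> ('a \<Rightarrow> real) \<Rightarrow> 'a set) \<Rightarrow> ('a \<times> nat \<Rightarrow> real) \<Rightarrow> ('a \<times> nat \<Rightarrow> real)
   \<Rightarrow> nat \<Rightarrow> 'a set list" where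
  "ctsg_hist \<gamma> m sel X Z 0 = []"
| "ctsg_hist \<gamma> m sel X Z (Suc t) =
     (let hs = ctsg_hist \<gamma> m sel X Z t in hs @ [sel (Suc t) (ctsg_sample \<gamma> m X Z hs (Suc t))])"

definition bandit_space ::
  "('a \<Rightarrow> real measure) \<Rightarrow> (('a \<times> nat \<Rightarrow> real) \<times> ('a \<times> nat \<Rightarrow> real)) measure" where
  "bandit_space p = (PiM UNIV (\<lambda>ak. p (fst ak))) \<Otimes>\<^sub>M (PiM UNIV (\<lambda>_. std_normal_distribution))"

definition std_normal_cdf :: "real \<Rightarrow> real" where
  "std_normal_cdf x = cdf std_normal_distribution x"

end

theory Submission
  imports Defs
begin



lemma distr_merge_PiM_inf:
  fixes M :: "'i \<Rightarrow> 'b measure"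
  assumes M: "\<And>i. prob_space (M i)" and JK: "J \<inter> K = {}"
  shows "distr (PiM J M \<Otimes>\<^sub>M PiM K M) (PiM (J \<union> K) M) (merge J K) = PiM (J \<union> K) M"
proof (rule measure_eqI_PiM_infinite[symmetric, OF refl])
  interpret PJ: prob_space "PiM J M" using M by (intro prob_space_PiM) auto
  interpret PK: prob_space "PiM K M" using M by (intro prob_space_PiM) auto
  interpret PU: prob_space "PiM (J \<union> K) M" using M by (intro prob_space_PiM) auto
  show "finite_measure (PiM (J \<union> K) M)" by unfold_locales
  fix A F assume F: "finite F" "F \<subseteq> J \<union> K" and A: "\<And>i. i \<in> F \<Longrightarrow> A i \<in> sets (M i)"
  let ?X = "prod_emb (J \<union> K) M F (Pi\<^sub>E F A)"
  have "PiM (J \<union> K) M ?X = (\<Prod>i\<in>F. M i (A i))"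
    using M F A by (intro emeasure_PiM_emb) auto
  also have "\<dots> = (\<Prod>i\<in>F \<inter> J. M i (A i)) * (\<Prod>i\<in>F \<inter> K. M i (A i))"
  proof -
    have "F = (F \<inter> J) \<union> (F \<inter> K)" using F by auto
    then have "(\<Prod>i\<in>F. M i (A i)) = (\<Prod>i\<in>(F \<inter> J) \<union> (F \<inter> K). M i (A i))" by simp
    also have "\<dots> = (\<Prod>i\<in>F \<inter> J. M i (A i)) * (\<Prod>i\<in>F \<inter> K. M i (A i))"
      using F JK by (intro prod.union_disjoint) auto
    finally show ?thesis .
  qed
  also have "(\<Prod>i\<in>F \<inter> J. M i (A i)) = PiM J M (prod_emb J M (F \<inter> J) (Pi\<^sub>E (F \<inter> J) A))"
    using M F A by (intro emeasure_PiM_emb[symmetric]) auto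
  also have "(\<Prod>i\<in>F \<inter> K. M i (A i)) = PiM K M (prod_emb K M (F \<inter> K) (Pi\<^sub>E (F \<inter> K) A))"
    using M F A by (intro emeasure_PiM_emb[symmetric]) auto
  also have "PiM J M (prod_emb J M (F \<inter> J) (Pi\<^sub>E (F \<inter> J) A)) * PiM K M (prod_emb K M (F \<inter> K) (Pi\<^sub>E (F \<inter> K) A))
     = (PiM J M \<Otimes>\<^sub>M PiM K M) (prod_emb J M (F \<inter> J) (Pi\<^sub>E (F \<inter> J) A) \<times> prod_emb K M (F \<inter> K) (Pi\<^sub>E (F \<inter> K) A))"
    using F A by (intro PK.emeasure_pair_measure_Times[symmetric] sets_PiM_I) auto
  also have "prod_emb J M (F \<inter> J) (Pi\<^sub>E (F \<inter> J) A) \<times> prod_emb K M (F \<inter> K) (Pi\<^sub>E (F \<inter> K) A)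
      = merge J K -` ?X \<inter> space (PiM J M \<Otimes>\<^sub>M PiM K M)"
    using JK F unfolding set_eq_iff
    by (auto simp: prod_emb_def space_pair_measure space_PiM PiE_iff merge_def extensional_def split: if_splits)
  also have "(PiM J M \<Otimes>\<^sub>M PiM K M) \<dots> = distr (PiM J M \<Otimes>\<^sub>M PiM K M) (PiM (J \<union> K) M) (merge J K) ?X"
    using F A by (intro emeasure_distr[symmetric] sets_PiM_I measurable_merge) auto
  finally show "PiM (J \<union> K) M ?X = distr (PiM J M \<Otimes>\<^sub>M PiM K M) (PiM (J \<union> K) M) (merge J K) ?X" .
qed simp




lemma indep_coords:
  fixes M :: "'i \<Rightarrow> 'b measure"
  assumes M: "\<And>i. prob_space (M i)" and I: "I \<noteq> {}" "I \<subseteq> K"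
  shows "prob_space.indep_vars (PiM K M) M (\<lambda>i \<omega>. \<omega> i) I"
proof -
  interpret P: prob_space "PiM K M" by (intro prob_space_PiM M)
  have "distr (PiM K M) (PiM I M) (\<lambda>x. \<lambda>i\<in>I. x i) = PiM I M"
    using distr_PiM_reindex[of K M id I] M I by (simp add: Pi_iff subset_iff)
  moreover have "PiM I (\<lambda>i. distr (PiM K M) (M i) (\<lambda>x. x i)) = PiM I M"
    using I by (intro PiM_cong refl distr_PiM_component) (auto simp: M)
  ultimately show ?thesis using I
    by (subst P.indep_vars_iff_distr_eq_PiM') (auto simp: measurable_component_singleton)
qed

lemma std_normal_prob: "prob_space std_normal_distribution"
  using real_dist_normal_dist real_distribution.axioms(1) by blast

lemma gauss_lower:
  fixes A :: "'i set" and \<sigma> :: "'i \<Rightarrow> real"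
  assumes A: "finite A" "A \<noteq> {}" "A \<subseteq> K" and \<sigma>: "\<And>i. i\<in>A \<Longrightarrow> \<sigma> i > 0"
    and D: "D \<le> c * sqrt (\<Sum>i\<in>A. (\<sigma> i)\<^sup>2)"
  shows "measure (PiM K (\<lambda>_. std_normal_distribution))
           {z \<in> space (PiM K (\<lambda>_. std_normal_distribution)). (\<Sum>i\<in>A. \<sigma> i * z i) \<ge> D}
         \<ge> std_normal_cdf (-c)"
proof -
  let ?N = "std_normal_distribution"
  let ?P = "PiM K (\<lambda>_. ?N)"
  interpret P: prob_space ?P by (intro prob_space_PiM std_normal_prob)
  have ind: "P.indep_vars (\<lambda>_. ?N) (\<lambda>i z. z i) A"
    using indep_coords[of "\<lambda>_. ?N" A K] A std_normal_prob by simp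
  have measN: "f \<in> measurable ?N borel" if "f \<in> borel_measurable borel" for f :: "real \<Rightarrow> real"
    using that measurable_cong_sets[of ?N borel borel borel] by simp
  have ind2: "P.indep_vars (\<lambda>_. borel) (\<lambda>i z. \<sigma> i * z i) A"
    by (rule P.indep_vars_compose2[OF ind, where Y="\<lambda>i x. \<sigma> i * x"])
       (auto intro: measN)
  have comp: "distributed ?P lborel (\<lambda>z. z i) std_normal_density" if "i \<in> K" for i
  proof -
    have "distr ?P lborel (\<lambda>z. z i) = distr ?P ?N (\<lambda>z. z i)"
      by (rule distr_cong) auto
    also have "\<dots> = ?N" using that by (intro distr_PiM_component std_normal_prob)
    finally show ?thesis unfolding distributed_def
      using measurable_component_singleton[OF that, where M="\<lambda>_. ?N"] measurable_cong_sets[of ?P ?P ?N borel]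
      by auto
  qed
  have dist: "distributed ?P lborel (\<lambda>z. \<sigma> i * z i) (normal_density 0 (\<sigma> i))" if "i \<in> A" for i
    using P.normal_density_affine[OF comp[of i], where \<alpha>="\<sigma> i" and \<beta>=0] that A \<sigma>[OF that] by auto
  define sd where "sd = sqrt (\<Sum>i\<in>A. (\<sigma> i)\<^sup>2)"
  have sd_pos: "sd > 0" unfolding sd_def using A \<sigma> by (intro real_sqrt_gt_zero sum_pos) (auto, fastforce)
  have S: "distributed ?P lborel (\<lambda>z. \<Sum>i\<in>A. \<sigma> i * z i) (normal_density 0 sd)"
    using P.sum_indep_normal[OF A(1,2) ind2 \<sigma> dist] unfolding sd_def by simp
  have W0: "distributed ?P lborel (\<lambda>z. ((\<Sum>i\<in>A. \<sigma> i * z i) - 0) / sd) std_normal_density"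
    using P.normal_standard_normal_convert[OF sd_pos] S by auto
  have W: "distributed ?P lborel (\<lambda>z. 0 + (-1) * (((\<Sum>i\<in>A. \<sigma> i * z i) - 0) / sd)) (normal_density (0 + (-1) * 0) (\<bar>-1\<bar> * 1))"
    by (rule P.normal_density_affine[OF W0]) auto
  define Wf where "Wf = (\<lambda>z. 0 + (-1) * (((\<Sum>i\<in>A. \<sigma> i * z i) - 0) / sd))"
  have Wd: "distr ?P lborel Wf = ?N" and Wm: "Wf \<in> borel_measurable ?P"
    using W unfolding distributed_def Wf_def by auto
  have "std_normal_cdf (-c) = measure ?N {..-c}" unfolding std_normal_cdf_def cdf_def by simp
  also have "\<dots> = measure ?P (Wf -` {..-c} \<inter> space ?P)"
    using measure_distr[of Wf ?P lborel "{..-c}"] Wm Wd by simp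
  also have "\<dots> \<le> measure ?P {z \<in> space ?P. (\<Sum>i\<in>A. \<sigma> i * z i) \<ge> D}"
  proof (rule P.finite_measure_mono)
    show "Wf -` {..-c} \<inter> space ?P \<subseteq> {z \<in> space ?P. (\<Sum>i\<in>A. \<sigma> i * z i) \<ge> D}"
    proof -
      have "D \<le> (\<Sum>i\<in>A. \<sigma> i * z i)" if "Wf z \<le> -c" for z
      proof -
        from that have "c \<le> (\<Sum>i\<in>A. \<sigma> i * z i) / sd" unfolding Wf_def by auto
        then have "c * sd \<le> (\<Sum>i\<in>A. \<sigma> i * z i)" using sd_pos by (simp add: field_simps)
        then show "D \<le> (\<Sum>i\<in>A. \<sigma> i * z i)" using D unfolding sd_def by linarith
      qed
      then show ?thesis by auto
    qed
    have "(\<lambda>z. \<Sum>i\<in>A. \<sigma> i * z i) \<in> borel_measurable ?P" using S unfolding distributed_def by auto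
    then show "{z \<in> space ?P. (\<Sum>i\<in>A. \<sigma> i * z i) \<ge> D} \<in> P.events" by measurable
  qed
  finally show ?thesis .
qed





lemma std_normal_cdf_pos: "std_normal_cdf x > 0"
proof -
  let ?N = "std_normal_distribution"
  interpret N: prob_space ?N by (rule std_normal_prob)
  define f0 where "f0 = exp (-((\<bar>x\<bar>+1)\<^sup>2)/2) / sqrt(2*pi)"
  have f0: "f0 > 0" unfolding f0_def by simp
  have le: "f0 \<le> std_normal_density y" if "y \<in> {x-1..x}" for y
  proof -
    have a: "\<bar>y\<bar> \<le> \<bar>x\<bar>+1" using that by auto
    have "\<bar>y\<bar>\<^sup>2 \<le> (\<bar>x\<bar>+1)\<^sup>2" by (rule power_mono[OF a abs_ge_zero])
    then have "y\<^sup>2 \<le> (\<bar>x\<bar>+1)\<^sup>2" by simp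
    then have "exp (-((\<bar>x\<bar>+1)\<^sup>2)/2) \<le> exp (- y\<^sup>2 / 2)" by simp
    then show ?thesis unfolding f0_def normal_density_def by (simp add: divide_right_mono)
  qed
  have "ennreal f0 = (\<integral>\<^sup>+y. ennreal f0 * indicator {x-1..x} y \<partial>lborel)"
    by (simp add: nn_integral_cmult_indicator)
  also have "\<dots> \<le> (\<integral>\<^sup>+y. ennreal (std_normal_density y) * indicator {..x} y \<partial>lborel)"
    by (intro nn_integral_mono) (auto split: split_indicator simp: le)
  also have "\<dots> = emeasure ?N {..x}"
    by (simp add: emeasure_density)
  also have "\<dots> = ennreal (std_normal_cdf x)"
    unfolding std_normal_cdf_def cdf_def by (simp add: N.emeasure_eq_measure)
  finally have "f0 \<le> std_normal_cdf x" using f0 by (auto simp add: ennreal_le_iff2)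
  with f0 show ?thesis by simp
qed




lemma hoeff_bad:
  fixes p :: "'a \<Rightarrow> real measure" and r :: "'a \<Rightarrow> real"
  assumes p_prob: "\<And>a. prob_space (p a)"
    and p_borel: "\<And>a. sets (p a) = sets borel"
    and p_supp: "\<And>a. measure (p a) {0..1} = 1"
    and r_mean: "\<And>a. r a = (\<integral>x. x \<partial>p a)"
    and n: "n \<ge> 1" and eps: "\<epsilon> \<ge> 0"
  shows "measure (PiM UNIV (\<lambda>ak. p (fst ak)))
           {X \<in> space (PiM UNIV (\<lambda>ak. p (fst ak))). (\<Sum>k<n. X (a, k)) \<le> real n * r a - \<epsilon>}
         \<le> exp (-2 * \<epsilon>\<^sup>2 / real n)"
proof -
  let ?M = "PiM UNIV (\<lambda>ak. p (fst ak))"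
  interpret P: prob_space ?M by (intro prob_space_PiM p_prob)
  define I where "I = (\<lambda>k. (a, k)) ` {..<n}"
  have inj: "inj_on (\<lambda>k. (a, k)) {..<n}" by (auto simp: inj_on_def)
  have Ine: "I \<noteq> {}" using n unfolding I_def by (auto simp: lessThan_empty_iff)
  have finI: "finite I" unfolding I_def by simp
  have cardI: "card I = n" unfolding I_def using card_image[OF inj] by simp
  have ind0: "P.indep_vars (\<lambda>i. p (fst i)) (\<lambda>i \<omega>. \<omega> i) I"
    using indep_coords[of "\<lambda>i. p (fst i)" I UNIV] p_prob Ine by simp
  have ind: "P.indep_vars (\<lambda>_. borel) (\<lambda>i \<omega>. \<omega> i) I"
  proof -
    have idm: "(\<lambda>x::real. x) \<in> borel_measurable (p a)" for a
      by (subst measurable_cong_sets[OF p_borel refl]) simp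
    show ?thesis
      using P.indep_vars_compose2[OF ind0, where Y="\<lambda>i x. x" and N="\<lambda>_. borel"] idm by auto
  qed
  have AE: "AE \<omega> in ?M. \<omega> i \<in> {0..1}" for i
  proof -
    interpret Pi: prob_space "p (fst i)" by (rule p_prob)
    have "AE x in p (fst i). x \<in> {0..1}" using p_supp by (intro Pi.AE_prob_1) auto
    then show ?thesis by (intro AE_PiM_component p_prob) auto
  qed
  have expect: "P.expectation (\<lambda>\<omega>. \<omega> i) = r (fst i)" for i
  proof -
    have "P.expectation (\<lambda>\<omega>. \<omega> i) = integral\<^sup>L (distr ?M (p (fst i)) (\<lambda>\<omega>. \<omega> i)) (\<lambda>x. x)"
      by (subst integral_distr) (auto simp: measurable_cong_sets[OF p_borel refl])
    also have "\<dots> = r (fst i)" by (subst distr_PiM_component) (auto simp: p_prob r_mean)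
    finally show ?thesis .
  qed
  have mu: "real n * r a = (\<Sum>i\<in>I. P.expectation (\<lambda>\<omega>. \<omega> i))"
  proof -
    have "(\<Sum>i\<in>I. P.expectation (\<lambda>\<omega>. \<omega> i)) = (\<Sum>i\<in>I. r a)"
      unfolding I_def by (intro sum.cong) (auto simp: expect)
    then show ?thesis using cardI by simp
  qed
  interpret H: Hoeffding_ineq ?M I "\<lambda>i \<omega>. \<omega> i" "\<lambda>_. 0" "\<lambda>_. 1" "real n * r a"
  proof unfold_locales
    show "finite I" by (rule finI)
    show "P.indep_vars (\<lambda>_. borel) (\<lambda>i \<omega>. \<omega> i) I" by (rule ind)
    show "AE \<omega> in ?M. \<omega> i \<in> {0..1}" for i by (rule AE)
  qed (use mu in simp)
  have "measure ?M {X \<in> space ?M. (\<Sum>i\<in>I. X i) \<le> real n * r a - \<epsilon>} \<le> exp (-2 * \<epsilon>\<^sup>2 / (\<Sum>i\<in>I. (1 - 0)\<^sup>2))"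
    using H.Hoeffding_ineq_le[OF eps] Ine finI by (simp add: card_gt_0_iff)
  moreover have "(\<Sum>i\<in>I. X i) = (\<Sum>k<n. X (a, k))" for X :: "'a \<times> nat \<Rightarrow> real"
    unfolding I_def by (simp add: sum.reindex[OF inj])
  ultimately show ?thesis using cardI by simp
qed





lemma hist_len: "length (ctsg_hist \<gamma> m sel X Z s) = s"
  by (induction s) (auto simp: Let_def)

lemma n_plays_le: "n_plays hs a \<le> length hs"
  unfolding n_plays_def by simp

lemma hist_agree:
  assumes "\<And>a s'. s' \<le> s \<Longrightarrow> Z (a, s') = Z' (a, s')"
  shows "ctsg_hist \<gamma> m sel X Z s = ctsg_hist \<gamma> m sel X Z' s"
  using assms
proof (induction s)
  case 0 then show ?case by simp
next
  case (Suc s)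
  have IH: "ctsg_hist \<gamma> m sel X Z s = ctsg_hist \<gamma> m sel X Z' s" using Suc by auto
  have "ctsg_sample \<gamma> m X Z hs (Suc s) = ctsg_sample \<gamma> m X Z' hs (Suc s)" for hs
    using Suc.prems by (auto simp: ctsg_sample_def fun_eq_iff)
  then show ?case using IH by (simp add: Let_def)
qed

lemma space_bandit:
  assumes p_borel: "\<And>a. sets (p a) = sets borel"
  shows "space (bandit_space p) = UNIV"
proof -
  have "space (p a) = UNIV" for a using sets_eq_imp_space_eq[OF p_borel[of a]] by simp
  then show ?thesis unfolding bandit_space_def by (simp add: space_pair_measure space_PiM)
qed

lemma X_comp_meas:
  assumes p_borel: "\<And>a. sets (p a) = sets borel"
  shows "(\<lambda>\<omega>. fst \<omega> i) \<in> borel_measurable (bandit_space p)"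
proof -
  have "(\<lambda>\<omega>. fst \<omega> i) \<in> measurable (bandit_space p) (p (fst i))"
    unfolding bandit_space_def
    by (rule measurable_compose[OF measurable_fst measurable_component_singleton]) simp
  then show ?thesis using measurable_cong_sets[OF refl p_borel[of "fst i"], of "bandit_space p"] by simp
qed

lemma Z_comp_meas:
  shows "(\<lambda>\<omega>. snd \<omega> i) \<in> borel_measurable (bandit_space p)"
proof -
  have "(\<lambda>\<omega>. snd \<omega> i) \<in> measurable (bandit_space p) std_normal_distribution"
    unfolding bandit_space_def
    by (rule measurable_compose[OF measurable_snd measurable_component_singleton]) simp
  then show ?thesis using measurable_cong_sets[OF refl, of "std_normal_distribution" borel "bandit_space p"] by simp
qed

lemma sample_meas:
  assumes p_borel: "\<And>a. sets (p a) = sets borel"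
  shows "(\<lambda>\<omega>. ctsg_sample \<gamma> m (fst \<omega>) (snd \<omega>) hs s a) \<in> borel_measurable (bandit_space p)"
  unfolding ctsg_sample_def emp_mean_def
  by (intro borel_measurable_add borel_measurable_times borel_measurable_divide borel_measurable_sum
      borel_measurable_const X_comp_meas Z_comp_meas p_borel)

lemma sample_meas_Pi:
  fixes p :: "'a \<Rightarrow> real measure"
  assumes p_borel: "\<And>a. sets (p a) = sets borel"
  shows "(\<lambda>\<omega>. ctsg_sample \<gamma> m (fst \<omega>) (snd \<omega>) hs s) \<in> measurable (bandit_space p) (PiM UNIV (\<lambda>_. borel))"
proof -
  have "(\<lambda>\<omega> a. ctsg_sample \<gamma> m (fst \<omega>) (snd \<omega>) hs s a) \<in> measurable (bandit_space p) (PiM UNIV (\<lambda>_. borel))"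
    by (rule measurable_PiM_single'[of UNIV "\<lambda>a \<omega>. ctsg_sample \<gamma> m (fst \<omega>) (snd \<omega>) hs s a" "bandit_space p" "\<lambda>_. borel", OF sample_meas[OF p_borel]])
      (auto simp: PiE_def extensional_def)
  then show ?thesis .
qed

lemma countable_hist: "countable (UNIV :: ('a::finite) set list set)"
proof -
  have "countable (lists (UNIV :: 'a set set))" using countable_lists[OF countable_finite[OF finite_class.finite_UNIV]] .
  then show ?thesis by (simp only: lists_UNIV)
qed


lemma hist_meas:
  fixes p :: "'a::finite \<Rightarrow> real measure"
  assumes p_borel: "\<And>a. sets (p a) = sets borel"
    and sel_meas: "\<And>s. sel s \<in> measurable (PiM UNIV (\<lambda>_. borel)) (count_space UNIV)"
  shows "(\<lambda>\<omega>. ctsg_hist \<gamma> m sel (fst \<omega>) (snd \<omega>) s) \<in> measurable (bandit_space p) (count_space UNIV)"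
proof (induction s)
  case 0 then show ?case by simp
next
  case (Suc s)
  have f: "(\<lambda>\<omega>. hs @ [sel (Suc s) (ctsg_sample \<gamma> m (fst \<omega>) (snd \<omega>) hs (Suc s))])
      \<in> measurable (bandit_space p) (count_space UNIV)" for hs
  proof -
    have "(\<lambda>\<omega>. sel (Suc s) (ctsg_sample \<gamma> m (fst \<omega>) (snd \<omega>) hs (Suc s))) \<in> measurable (bandit_space p) (count_space UNIV)"
      by (rule measurable_compose[OF sample_meas_Pi[OF p_borel] sel_meas])
    then show ?thesis by simp
  qed
  have "(\<lambda>\<omega>. (\<lambda>hs \<omega>. hs @ [sel (Suc s) (ctsg_sample \<gamma> m (fst \<omega>) (snd \<omega>) hs (Suc s))])
      (ctsg_hist \<gamma> m sel (fst \<omega>) (snd \<omega>) s) \<omega>) \<in> measurable (bandit_space p) (count_space UNIV)"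
    by (rule measurable_compose_countable'[OF f _ countable_hist]) (use Suc in simp)
  then show ?case by (simp add: Let_def)
qed

lemma event_meas:
  fixes p :: "'a::finite \<Rightarrow> real measure"
  assumes p_borel: "\<And>a. sets (p a) = sets borel"
    and sel_meas: "\<And>s. sel s \<in> measurable (PiM UNIV (\<lambda>_. borel)) (count_space UNIV)"
  shows "{\<omega> \<in> space (bandit_space p). (\<Sum>a\<in>A. ctsg_sample \<gamma> m (fst \<omega>) (snd \<omega>)
            (ctsg_hist \<gamma> m sel (fst \<omega>) (snd \<omega>) s) t a) \<ge> R} \<in> sets (bandit_space p)"
proof -
  have f: "(\<lambda>\<omega>. (\<Sum>a\<in>A. ctsg_sample \<gamma> m (fst \<omega>) (snd \<omega>) hs t a)) \<in> borel_measurable (bandit_space p)" for hs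
    by (intro borel_measurable_sum sample_meas p_borel)
  have "(\<lambda>\<omega>. (\<lambda>hs \<omega>. (\<Sum>a\<in>A. ctsg_sample \<gamma> m (fst \<omega>) (snd \<omega>) hs t a)) (ctsg_hist \<gamma> m sel (fst \<omega>) (snd \<omega>) s) \<omega>)
     \<in> borel_measurable (bandit_space p)"
    by (rule measurable_compose_countable'[OF f _ countable_hist]) (use hist_meas[OF p_borel sel_meas] in simp)
  then have "(\<lambda>\<omega>. (\<Sum>a\<in>A. ctsg_sample \<gamma> m (fst \<omega>) (snd \<omega>) (ctsg_hist \<gamma> m sel (fst \<omega>) (snd \<omega>) s) t a)) -` {R..} \<inter> space (bandit_space p) \<in> sets (bandit_space p)"
    by (rule measurable_sets) simp
  moreover have "(\<lambda>\<omega>. (\<Sum>a\<in>A. ctsg_sample \<gamma> m (fst \<omega>) (snd \<omega>) (ctsg_hist \<gamma> m sel (fst \<omega>) (snd \<omega>) s) t a)) -` {R..} \<inter> space (bandit_space p) = {\<omega> \<in> space (bandit_space p). (\<Sum>a\<in>A. ctsg_sample \<gamma> m (fst \<omega>) (snd \<omega>)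
            (ctsg_hist \<gamma> m sel (fst \<omega>) (snd \<omega>) s) t a) \<ge> R}" by auto
  ultimately show ?thesis by (simp only:)
qed




lemma r_le1:
  assumes "prob_space (p a)" "sets (p a) = sets borel" "measure (p a) {0..1} = 1"
  shows "(\<integral>x. x \<partial>p a) \<le> (1::real)"
proof -
  interpret Pa: prob_space "p a" by fact
  have AE: "AE x in p a. x \<in> {0..1::real}" using assms(2,3) by (intro Pa.AE_prob_1) auto
  have meas: "(\<lambda>x::real. x) \<in> borel_measurable (p a)"
    by (subst measurable_cong_sets[OF assms(2) refl]) simp
  have int: "integrable (p a) (\<lambda>x::real. x)"
    by (rule Pa.integrable_const_bound[where B=1]) (use AE meas in auto)
  show ?thesis by (rule Pa.integral_le_const[OF int]) (use AE in auto)
qed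

lemma ln_ge_34:
  assumes "real t \<ge> 4" shows "ln (real t) \<ge> 3/4"
proof -
  have tp: "real t > 0" using assms by simp
  have "ln (1 / real t) \<le> 1 / real t - 1" using tp by (intro ln_le_minus_one) simp
  then have "1 - 1 / real t \<le> ln (real t)" using tp by (simp add: ln_div)
  moreover have "1 / real t \<le> 1/4" using assms by (simp add: field_simps)
  ultimately show ?thesis by linarith
qed

lemma det_bound:
  fixes A :: "'a set" and X :: "'a \<times> nat \<Rightarrow> real" and hs :: "'a set list"
  assumes finA: "finite A" and cardA: "card A \<le> m" and \<gamma>: "\<gamma> > 0" and L: "L \<ge> 1/4"
    and r1: "\<And>a. r a \<le> 1"
    and len: "\<And>a. n_plays hs a < t"
    and good: "\<And>a n. a \<in> A \<Longrightarrow> 1 \<le> n \<Longrightarrow> n < t \<Longrightarrow> real n * r a - sqrt (2 * real n * L) < (\<Sum>k<n. X (a, k))"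
  shows "(\<Sum>a\<in>A. r a - emp_mean X hs a)
           \<le> sqrt (4/\<gamma>) * sqrt (\<Sum>a\<in>A. (sqrt (\<gamma> * real m * L / (real (n_plays hs a) + 1)))\<^sup>2)"
proof -
  define w where "w a = 1 / (real (n_plays hs a) + 1)" for a
  have wpos: "w a > 0" for a unfolding w_def by simp
  have per: "r a - emp_mean X hs a \<le> sqrt (4 * L * w a)" if a: "a \<in> A" for a
  proof (cases "n_plays hs a = 0")
    case True
    then have "emp_mean X hs a = 0" unfolding emp_mean_def by simp
    moreover have "1 \<le> sqrt (4 * L * w a)" using True L unfolding w_def by simp
    ultimately show ?thesis using r1[of a] by linarith
  next
    case False
    define n where "n = n_plays hs a"
    have n1: "1 \<le> n" using False n_def by simp
    have nt: "n < t" using len n_def by simp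
    have np: "real n > 0" using n1 by simp
    have g: "real n * r a - sqrt (2 * real n * L) < (\<Sum>k<n. X (a, k))" by (rule good[OF a n1 nt])
    have em: "emp_mean X hs a = (\<Sum>k<n. X (a, k)) / real n" unfolding emp_mean_def n_def by simp
    have "r a - emp_mean X hs a < sqrt (2 * real n * L) / real n"
    proof -
      have "real n * r a - (\<Sum>k<n. X (a, k)) < sqrt (2 * real n * L)" using g by linarith
      then have "(real n * r a - (\<Sum>k<n. X (a, k))) / real n < sqrt (2 * real n * L) / real n"
        using np by (rule divide_strict_right_mono)
      moreover have "(real n * r a - (\<Sum>k<n. X (a, k))) / real n = r a - (\<Sum>k<n. X (a, k)) / real n"
        using np by (simp add: field_simps)
      ultimately show ?thesis unfolding em by simp
    qed
    also have "\<dots> \<le> sqrt (4 * L * w a)"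
    proof (rule real_le_rsqrt)
      have "(sqrt (2 * real n * L) / real n)\<^sup>2 = 2 * real n * L / (real n)\<^sup>2"
        using L by (simp add: power_divide)
      also have "\<dots> = 2 * L / real n" using np by (simp add: power2_eq_square field_simps)
      also have "\<dots> \<le> 4 * L * w a"
        unfolding w_def n_def[symmetric] using np L n1 by (simp add: field_simps)
      finally show "(sqrt (2 * real n * L) / real n)\<^sup>2 \<le> 4 * L * w a" .
    qed
    finally show ?thesis by simp
  qed
  have "(\<Sum>a\<in>A. r a - emp_mean X hs a) \<le> (\<Sum>a\<in>A. 1 * sqrt (4 * L * w a))"
    using per by (intro sum_mono) simp
  also have "\<dots> \<le> sqrt ((\<Sum>a\<in>A. 1\<^sup>2) * (\<Sum>a\<in>A. (sqrt (4 * L * w a))\<^sup>2))"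
    by (rule real_le_rsqrt[OF Cauchy_Schwarz_ineq_sum])
  also have "\<dots> = sqrt (real (card A) * (\<Sum>a\<in>A. 4 * L * w a))"
    using L wpos by (simp add: less_imp_le)
  also have "\<dots> \<le> sqrt (real m * (\<Sum>a\<in>A. 4 * L * w a))"
  proof -
    have "0 \<le> (\<Sum>a\<in>A. 4 * L * w a)" using L wpos by (intro sum_nonneg) (simp add: less_imp_le)
    then show ?thesis using cardA by (intro real_sqrt_le_mono mult_right_mono) auto
  qed
  also have "\<dots> = sqrt (4/\<gamma> * (\<Sum>a\<in>A. \<gamma> * real m * L * w a))"
    using \<gamma> by (simp add: sum_distrib_left field_simps)
  also have "\<dots> = sqrt (4/\<gamma>) * sqrt (\<Sum>a\<in>A. (sqrt (\<gamma> * real m * L / (real (n_plays hs a) + 1)))\<^sup>2)"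
  proof -
    have "(sqrt (\<gamma> * real m * L / (real (n_plays hs a) + 1)))\<^sup>2 = \<gamma> * real m * L * w a" for a
      using \<gamma> L unfolding w_def by simp
    then show ?thesis by (simp only: real_sqrt_mult)
  qed
  finally show ?thesis .
qed





theorem lemma4:
  fixes p :: "'a::finite \<Rightarrow> real measure"
    and r :: "'a \<Rightarrow> real"
    and \<Theta> :: "'a set set"
    and \<Theta>s :: "nat \<Rightarrow> 'a set set"
    and sel :: "nat \<Rightarrow> ('a \<Rightarrow> real) \<Rightarrow> 'a set"
    and \<gamma> :: real and t :: nat and Astar :: "'a set"
  assumes N2: "CARD('a) \<ge> 2"
    and p_prob: "\<And>a. prob_space (p a)"
    and p_borel: "\<And>a. sets (p a) = sets borel"
    and p_supp: "\<And>a. measure (p a) {0..1} = 1"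
    and r_mean: "\<And>a. r a = (\<integral>x. x \<partial>p a)"
    and \<Theta>_ne: "\<Theta> \<noteq> {}"
    and \<Theta>s_sub: "\<And>s. s \<ge> 1 \<Longrightarrow> \<Theta>s s \<subseteq> \<Theta>"
    and \<Theta>s_ne: "\<And>s. s \<ge> 1 \<Longrightarrow> \<Theta>s s \<noteq> {}"
    and sel_in: "\<And>s w. s \<ge> 1 \<Longrightarrow> sel s w \<in> \<Theta>s s"
    and sel_max: "\<And>s w B. s \<ge> 1 \<Longrightarrow> B \<in> \<Theta>s s \<Longrightarrow> (\<Sum>a\<in>B. w a) \<le> (\<Sum>a\<in>sel s w. w a)"
    and sel_meas: "\<And>s. sel s \<in> measurable (PiM UNIV (\<lambda>_. borel)) (count_space UNIV)"
    and \<gamma>_pos: "\<gamma> > 0"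
    and t_ge: "real t \<ge> max (sqrt (real (Max (card ` \<Theta>)))) 4"
    and Astar_in: "Astar \<in> \<Theta>s t"
    and Astar_opt: "\<And>B. B \<in> \<Theta>s t \<Longrightarrow> (\<Sum>a\<in>B. r a) \<le> (\<Sum>a\<in>Astar. r a)"
  shows "let m = Max (card ` \<Theta>);
             P = measure (bandit_space p)
                   {\<omega> \<in> space (bandit_space p).
                      (\<Sum>a\<in>Astar. ctsg_sample \<gamma> m (fst \<omega>) (snd \<omega>)
                                     (ctsg_hist \<gamma> m sel (fst \<omega>) (snd \<omega>) (t - 1)) t a)
                      \<ge> (\<Sum>a\<in>Astar. r a)}
         in P > 0 \<and> 1 / P \<le> 2 * inverse (std_normal_cdf (- sqrt (4 / \<gamma>)))"
proof -
  define m where "m = Max (card ` \<Theta>)"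
  define M where "M = bandit_space p"
  define MX where "MX = PiM UNIV (\<lambda>ak::'a \<times> nat. p (fst ak))"
  define MZ where "MZ = PiM UNIV (\<lambda>_::'a \<times> nat. std_normal_distribution)"
  have M_eq: "M = MX \<Otimes>\<^sub>M MZ" unfolding M_def MX_def MZ_def bandit_space_def by simp
  define R where "R = (\<Sum>a\<in>Astar. r a)"
  define E where "E = {\<omega> \<in> space M. (\<Sum>a\<in>Astar. ctsg_sample \<gamma> m (fst \<omega>) (snd \<omega>)
                                     (ctsg_hist \<gamma> m sel (fst \<omega>) (snd \<omega>) (t - 1)) t a) \<ge> R}"
  define P where "P = measure M E"
  define c where "c = sqrt (4 / \<gamma>)"
  define \<Phi> where "\<Phi> = std_normal_cdf (- c)"
  have \<Phi>pos: "\<Phi> > 0" unfolding \<Phi>_def by (rule std_normal_cdf_pos)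
  interpret MX: prob_space MX unfolding MX_def by (intro prob_space_PiM p_prob)
  interpret MZ: prob_space MZ unfolding MZ_def by (intro prob_space_PiM std_normal_prob)
  interpret M: prob_space M unfolding M_eq by (intro prob_space_pair MX.prob_space_axioms MZ.prob_space_axioms)
  have spaceM: "space M = UNIV" unfolding M_def by (rule space_bandit[OF p_borel])
  have E_sets: "E \<in> sets M" unfolding E_def M_def by (rule event_meas[OF p_borel sel_meas])
  have key: "P \<ge> 3/4 * \<Phi>"
  proof (cases "Astar = {}")
    case True
    then have "E = space M" unfolding E_def R_def by simp
    then have "P = 1" unfolding P_def by (simp add: M.prob_space)
    moreover have "\<Phi> \<le> 1" unfolding \<Phi>_def std_normal_cdf_def cdf_def
      using std_normal_prob prob_space.prob_le_1 by blast
    ultimately show ?thesis by simp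
  next
    case Ane: False
    have t4: "real t \<ge> 4" using t_ge by simp
    have t1: "t \<ge> 1" using t4 by simp
    have finTheta: "finite \<Theta>" by simp
    have AinT: "Astar \<in> \<Theta>" using \<Theta>s_sub[OF t1] Astar_in by auto
    have cardA: "card Astar \<le> m" unfolding m_def using AinT finTheta by (intro Max_ge) auto
    have finA: "finite Astar" by simp
    have "card Astar > 0" using Ane finA by (simp add: card_gt_0_iff)
    then have m1: "m \<ge> 1" using cardA by linarith
    have mt: "real m \<le> (real t)\<^sup>2"
    proof -
      have "sqrt (real m) \<le> real t" using t_ge unfolding m_def by simp
      then have "(sqrt (real m))\<^sup>2 \<le> (real t)\<^sup>2" by (intro power_mono) auto
      then show ?thesis by simp
    qed
    define L where "L = ln (real t)"
    have L34: "L \<ge> 3/4" unfolding L_def by (rule ln_ge_34[OF t4])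
    have r1: "r a \<le> 1" for a unfolding r_mean by (rule r_le1[of p a, OF p_prob p_borel p_supp])
    define B where "B = (\<lambda>(a, n). {X \<in> space MX. (\<Sum>k<n. X (a, k)) \<le> real n * r a - sqrt (2 * real n * L)})"
    define Idx where "Idx = Astar \<times> {1..<t}"
    define G where "G = space MX - (\<Union>i\<in>Idx. B i)"
    have compX: "(\<lambda>X. X i) \<in> borel_measurable MX" for i
    proof -
      have "(\<lambda>X. X i) \<in> measurable MX (p (fst i))" unfolding MX_def by (rule measurable_component_singleton) simp
      then show ?thesis using measurable_cong_sets[OF refl p_borel[of "fst i"], of MX] by simp
    qed
    have B_sets: "B i \<in> sets MX" for i
    proof -
      obtain a n where i: "i = (a, n)" by (cases i)
      have f: "(\<lambda>X. (\<Sum>k<n. X (a, k)) - (real n * r a - sqrt (2 * real n * L))) \<in> borel_measurable MX"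
        by (intro borel_measurable_diff borel_measurable_sum borel_measurable_const compX)
      have "(\<lambda>X. (\<Sum>k<n. X (a, k)) - (real n * r a - sqrt (2 * real n * L))) -` {..0} \<inter> space MX \<in> sets MX"
        by (rule measurable_sets[OF f]) simp
      moreover have "(\<lambda>X. (\<Sum>k<n. X (a, k)) - (real n * r a - sqrt (2 * real n * L))) -` {..0} \<inter> space MX = B i"
        unfolding B_def i by auto
      ultimately show ?thesis by simp
    qed
    have finIdx: "finite Idx" unfolding Idx_def by simp
    have U_sets: "(\<Union>i\<in>Idx. B i) \<in> sets MX" using finIdx B_sets by auto
    have G_sets: "G \<in> sets MX" unfolding G_def using U_sets by auto
    have PG: "measure MX G \<ge> 3/4"
    proof -
      have tp: "real t > 0" using t4 by simp
      have eachB: "measure MX (B i) \<le> 1 / (real t)^4" if i: "i \<in> Idx" for i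
      proof -
        obtain a n where an: "i = (a, n)" by (cases i)
        have n1: "n \<ge> 1" using i an unfolding Idx_def by auto
        have np: "real n > 0" using n1 by simp
        have "measure MX (B i) \<le> exp (-2 * (sqrt (2 * real n * L))\<^sup>2 / real n)"
          unfolding an B_def MX_def using hoeff_bad[where p=p and r=r and n=n and \<epsilon>="sqrt (2 * real n * L)" and a=a, OF p_prob p_borel p_supp r_mean n1] L34
          by simp
        also have "-2 * (sqrt (2 * real n * L))\<^sup>2 / real n = - (4 * L)" using np L34 by simp
        also have "exp (- (4 * L)) = 1 / (real t)^4"
        proof -
          have "ln ((real t)^4) = 4 * L" unfolding L_def using tp by (simp add: ln_realpow)
          then have "exp (4 * L) = exp (ln ((real t)^4))" by simp
          also have "\<dots> = (real t)^4" using tp by simp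
          finally have "exp (4 * L) = (real t)^4" .
          then show ?thesis by (simp add: exp_minus field_simps)
        qed
        finally show ?thesis .
      qed
      have "measure MX (\<Union>i\<in>Idx. B i) \<le> (\<Sum>i\<in>Idx. measure MX (B i))"
        by (rule MX.finite_measure_subadditive_finite) (use finIdx B_sets in auto)
      also have "\<dots> \<le> real (card Idx) * (1 / (real t)^4)"
        by (rule sum_bounded_above) (rule eachB)
      also have "\<dots> \<le> (real t)^3 * (1 / (real t)^4)"
      proof (rule mult_right_mono)
        have "card Idx = card Astar * (t - 1)" unfolding Idx_def by (simp add: card_cartesian_product)
        then have "real (card Idx) \<le> real m * real t" using cardA
          by (simp add: mult_mono)
        also have "\<dots> \<le> (real t)^2 * real t" using mt tp by (intro mult_right_mono) auto
        finally show "real (card Idx) \<le> (real t)^3" by (simp add: power3_eq_cube power2_eq_square)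
      qed simp
      also have "\<dots> = 1 / real t" using tp by (simp add: field_simps power3_eq_cube power4_eq_xxxx)
      also have "\<dots> \<le> 1/4" using t4 by (simp add: field_simps)
      finally have "measure MX (\<Union>i\<in>Idx. B i) \<le> 1/4" .
      moreover have "measure MX G = 1 - measure MX (\<Union>i\<in>Idx. B i)"
        unfolding G_def by (rule MX.prob_compl[OF U_sets])
      ultimately show ?thesis by simp
    qed
    have slice: "emeasure MZ (Pair X -` E) \<ge> ennreal \<Phi>" if XG: "X \<in> G" for X
    proof -
      let ?N = "std_normal_distribution"
      define J where "J = {i::'a \<times> nat. snd i \<noteq> t}"
      define I where "I = {i::'a \<times> nat. snd i = t}"
      define PJ where "PJ = PiM J (\<lambda>_. ?N)"
      define PI where "PI = PiM I (\<lambda>_. ?N)"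
      interpret PJ: prob_space PJ unfolding PJ_def by (intro prob_space_PiM std_normal_prob)
      interpret PI: prob_space PI unfolding PI_def by (intro prob_space_PiM std_normal_prob)
      have UJI: "J \<union> I = UNIV" and DJI: "J \<inter> I = {}" unfolding J_def I_def by auto
      have MZ_distr: "distr (PJ \<Otimes>\<^sub>M PI) MZ (merge J I) = MZ"
        using distr_merge_PiM_inf[of "\<lambda>_. ?N" J I, OF std_normal_prob DJI]
        unfolding PJ_def PI_def MZ_def UJI .
      have merge_meas: "merge J I \<in> measurable (PJ \<Otimes>\<^sub>M PI) MZ"
        using measurable_merge[of J I "\<lambda>_. ?N"] unfolding PJ_def PI_def MZ_def UJI .
      have E_sets': "E \<in> sets (MX \<Otimes>\<^sub>M MZ)" using E_sets M_eq by simp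
      define S where "S = Pair X -` E"
      have S_sets: "S \<in> sets MZ" unfolding S_def by (rule sets_Pair1[OF E_sets'])
      define T where "T = merge J I -` S \<inter> space (PJ \<Otimes>\<^sub>M PI)"
      have T_sets: "T \<in> sets (PJ \<Otimes>\<^sub>M PI)" unfolding T_def by (rule measurable_sets[OF merge_meas S_sets])
      have inner: "emeasure PI (Pair zJ -` T) \<ge> ennreal \<Phi>" if zJ: "zJ \<in> space PJ" for zJ
      proof -
        define Z0 where "Z0 = merge J I (zJ, \<lambda>_. 0)"
        define H where "H = ctsg_hist \<gamma> m sel X Z0 (t - 1)"
        define e where "e a = emp_mean X H a" for a
        define \<sigma> where "\<sigma> a = sqrt (\<gamma> * real m * L / (real (n_plays H a) + 1))" for a
        have hist_eq: "ctsg_hist \<gamma> m sel X (merge J I (zJ, zI)) (t - 1) = H" for zI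
          unfolding H_def
        proof (rule hist_agree)
          fix a s' assume "s' \<le> t - 1"
          then have "(a, s') \<in> J" using t1 unfolding J_def by auto
          then show "merge J I (zJ, zI) (a, s') = Z0 (a, s')" unfolding Z0_def merge_def by simp
        qed
        have samp_eq: "ctsg_sample \<gamma> m X (merge J I (zJ, zI)) H t a = e a + \<sigma> a * zI (a, t)" for zI a
        proof -
          have "(a, t) \<notin> J" "(a, t) \<in> I" unfolding J_def I_def by auto
          then show ?thesis unfolding ctsg_sample_def e_def \<sigma>_def L_def merge_def by simp
        qed
        define A' where "A' = (\<lambda>a. (a, t)) ` Astar"
        define \<sigma>' where "\<sigma>' (i::'a \<times> nat) = \<sigma> (fst i)" for i
        define D where "D = (\<Sum>a\<in>Astar. r a - e a)"
        have inj: "inj_on (\<lambda>a. (a, t)) Astar" by (auto simp: inj_on_def)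
        have sumA': "(\<Sum>i\<in>A'. f i) = (\<Sum>a\<in>Astar. f (a, t))" for f :: "'a \<times> nat \<Rightarrow> real"
          unfolding A'_def by (simp add: sum.reindex[OF inj])
        have setq: "Pair zJ -` T = {zI \<in> space PI. (\<Sum>i\<in>A'. \<sigma>' i * zI i) \<ge> D}"
        proof -
          have sum_eq: "(\<Sum>a\<in>Astar. ctsg_sample \<gamma> m (fst (X, merge J I (zJ, zI))) (snd (X, merge J I (zJ, zI)))
              (ctsg_hist \<gamma> m sel (fst (X, merge J I (zJ, zI))) (snd (X, merge J I (zJ, zI))) (t - 1)) t a)
              = (\<Sum>a\<in>Astar. e a + \<sigma> a * zI (a, t))" for zI
            by (simp only: fst_conv snd_conv hist_eq samp_eq)
          have "Pair zJ -` T = {zI \<in> space PI. (X, merge J I (zJ, zI)) \<in> E}"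
            unfolding T_def S_def using zJ by (auto simp: space_pair_measure)
          also have "\<dots> = {zI \<in> space PI. R \<le> (\<Sum>a\<in>Astar. e a + \<sigma> a * zI (a, t))}"
            unfolding E_def spaceM by (simp only: mem_Collect_eq UNIV_I simp_thms sum_eq)
          also have "\<dots> = {zI \<in> space PI. (\<Sum>i\<in>A'. \<sigma>' i * zI i) \<ge> D}"
          proof -
            have "R \<le> (\<Sum>a\<in>Astar. e a + \<sigma> a * zI (a, t)) \<longleftrightarrow> (\<Sum>i\<in>A'. \<sigma>' i * zI i) \<ge> D" for zI
              unfolding sumA' \<sigma>'_def D_def R_def by (simp add: sum.distrib sum_subtractf) linarith
            then show ?thesis by auto
          qed
          finally show ?thesis .
        qed
        have lenH: "n_plays H a < t" for a
          using n_plays_le[of H a] hist_len[of \<gamma> m sel X Z0 "t - 1"] t1 unfolding H_def by simp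
        have good: "real n * r a - sqrt (2 * real n * L) < (\<Sum>k<n. X (a, k))"
          if "a \<in> Astar" "1 \<le> n" "n < t" for a n
        proof -
          have "(a, n) \<in> Idx" using that unfolding Idx_def by auto
          then have "X \<notin> B (a, n)" using XG unfolding G_def by auto
          moreover have "X \<in> space MX" using XG unfolding G_def by auto
          ultimately show ?thesis unfolding B_def by auto
        qed
        have Dle: "D \<le> c * sqrt (\<Sum>a\<in>Astar. (\<sigma> a)\<^sup>2)"
          unfolding D_def e_def c_def \<sigma>_def
          by (rule det_bound[OF finA cardA \<gamma>_pos _ r1 lenH good]) (use L34 in simp)
        have \<sigma>pos: "\<sigma>' i > 0" for i
          unfolding \<sigma>'_def \<sigma>_def using \<gamma>_pos m1 L34 by simp
        have "\<Phi> \<le> measure PI {zI \<in> space PI. (\<Sum>i\<in>A'. \<sigma>' i * zI i) \<ge> D}"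
          unfolding \<Phi>_def PI_def
        proof (rule gauss_lower)
          show "finite A'" unfolding A'_def by simp
          show "A' \<noteq> {}" unfolding A'_def using Ane by simp
          show "A' \<subseteq> I" unfolding A'_def I_def by auto
          show "\<And>i. i \<in> A' \<Longrightarrow> 0 < \<sigma>' i" using \<sigma>pos by simp
          show "D \<le> c * sqrt (\<Sum>i\<in>A'. (\<sigma>' i)\<^sup>2)" using Dle unfolding sumA' \<sigma>'_def by simp
        qed
        then show ?thesis unfolding setq by (simp add: PI.emeasure_eq_measure)
      qed
      have "emeasure MZ S = emeasure (distr (PJ \<Otimes>\<^sub>M PI) MZ (merge J I)) S" using MZ_distr by simp
      also have "\<dots> = emeasure (PJ \<Otimes>\<^sub>M PI) T" unfolding T_def by (rule emeasure_distr[OF merge_meas S_sets])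
      also have "\<dots> = (\<integral>\<^sup>+zJ. emeasure PI (Pair zJ -` T) \<partial>PJ)" by (rule PI.emeasure_pair_measure_alt[OF T_sets])
      also have "\<dots> \<ge> (\<integral>\<^sup>+zJ. ennreal \<Phi> \<partial>PJ)" by (intro nn_integral_mono inner)
      also have "(\<integral>\<^sup>+zJ. ennreal \<Phi> \<partial>PJ) = ennreal \<Phi>" by (simp add: PJ.emeasure_space_1)
      finally show ?thesis unfolding S_def .
    qed
    have E_sets': "E \<in> sets (MX \<Otimes>\<^sub>M MZ)" using E_sets M_eq by simp
    have "ennreal (3/4 * \<Phi>) = ennreal \<Phi> * ennreal (3/4)"
      using \<Phi>pos by (simp add: ennreal_mult'[symmetric] mult.commute)
    also have "\<dots> \<le> ennreal \<Phi> * emeasure MX G"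
      using PG by (intro mult_left_mono) (auto simp: MX.emeasure_eq_measure)
    also have "\<dots> = (\<integral>\<^sup>+X. ennreal \<Phi> * indicator G X \<partial>MX)"
      using G_sets by (simp add: nn_integral_cmult_indicator)
    also have "\<dots> \<le> (\<integral>\<^sup>+X. emeasure MZ (Pair X -` E) \<partial>MX)"
      by (intro nn_integral_mono) (auto split: split_indicator intro: slice)
    also have "\<dots> = emeasure (MX \<Otimes>\<^sub>M MZ) E"
      by (rule MZ.emeasure_pair_measure_alt[OF E_sets', symmetric])
    also have "\<dots> = ennreal P" unfolding P_def using M_eq M.emeasure_eq_measure by simp
    finally show ?thesis using \<Phi>pos by (simp add: ennreal_le_iff2)
  qed
  have Ppos: "P > 0" using key \<Phi>pos by linarith
  have "1 / P \<le> 1 / (3/4 * \<Phi>)" using key \<Phi>pos by (intro divide_left_mono) auto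
  also have "\<dots> \<le> 2 * inverse \<Phi>" using \<Phi>pos by (simp add: field_simps)
  finally have fin: "P > 0 \<and> 1 / P \<le> 2 * inverse \<Phi>" using Ppos by simp
  show ?thesis unfolding Let_def using fin unfolding P_def E_def M_def R_def m_def \<Phi>_def c_def .
qed


end
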